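(* Let $T$ be a tree such that the longest $2$-path in $T$ has length $d\ge1$, and let $k$ be a positive integer. Then there exists $L>0$ (depending only on $k$ and $d$) such that the following holds: if $T$ contains a $\mathrm{C}$-gadget of order $d$ and length $L$, then there exists $1\le d'\le d$ such that $T$ contains a strong $\mathrm{C}$-gadget of order $d'$ with at least $k$ junctions.
   Context: In a tree $T$: a $2$-path of length $a$ is a path $x_0,\dots,x_a$ with $\deg(x_0)\ne2$, $\deg(x_1)=\dots=\deg(x_{a-1})=2$, $\deg(x_a)\ne 2$. A source is a vertex of degree $>2$. A ray of length $a$ is a $2$-path $x_0,\dots,x_a$ with $\deg(x_0)>2$ and $\deg(x_a)=1$; $x_0$ is its source. A $\mathrm{C}$-gadget of order $d$ and length $k$ is a path $x_0,\dots,x_k$ in $T$ such that each inner vertex $x_i$ either has degree $2$ or is a source such that every neighbour of $x_i$ other than $x_{i-1},x_{i+1}$ is contained in a ray of length at most $d$ from $x_i$ to a leaf. A $\mathrm{C}$-gadget $x_0,\dots,x_L$ of order $d$ is a strong $\mathrm{C}$-gadget with $k$ junctions if there are integers $0=i_0<i_1<\dots<i_k<i_{k+1}=L$ such that (I) $i_{j+1}-i_j>2d$ for all $j\in\{0,\dots,k\}$, and (II) for all $j\in\{1,\dots,k\}$, $x_{i_j}$ is the source of a ray of length $d$ containing neither $x_{i_j-1}$ nor $x_{i_j+1}$; the vertices $x_{i_1},\dots,x_{i_k}$ are the junctions. *)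

theory Defs
  imports Main
begin

text \<open>A path is a nonempty list of distinct vertices, consecutive ones adjacent;
  a path x_0,...,x_a is a list of length a+1.\<close>

definition is_path :: "nat set \<Rightarrow> (nat \<Rightarrow> nat \<Rightarrow> bool) \<Rightarrow> nat list \<Rightarrow> bool" where
  "is_path V E xs \<longleftrightarrow> xs \<noteq> [] \<and> distinct xs \<and> set xs \<subseteq> V \<and>
     (\<forall>i. Suc i < length xs \<longrightarrow> E (xs ! i) (xs ! Suc i))"

definition is_tree :: "nat set \<Rightarrow> (nat \<Rightarrow> nat \<Rightarrow> bool) \<Rightarrow> bool" where
  "is_tree V E \<longleftrightarrow> finite V \<and> V \<noteq> {} \<and>
     (\<forall>x y. E x y \<longrightarrow> x \<in> V \<and> y \<in> V) \<and>
     (\<forall>x y. E x y \<longrightarrow> E y x) \<and> (\<forall>x. \<not> E x x) \<and>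
     (\<forall>x\<in>V. \<forall>y\<in>V. \<exists>xs. is_path V E xs \<and> hd xs = x \<and> last xs = y) \<and>
     \<not> (\<exists>xs. is_path V E xs \<and> length xs \<ge> 3 \<and> E (last xs) (hd xs))"

definition deg :: "nat set \<Rightarrow> (nat \<Rightarrow> nat \<Rightarrow> bool) \<Rightarrow> nat \<Rightarrow> nat" where
  "deg V E x = card {y \<in> V. E x y}"

definition two_path :: "nat set \<Rightarrow> (nat \<Rightarrow> nat \<Rightarrow> bool) \<Rightarrow> nat list \<Rightarrow> nat \<Rightarrow> bool" where
  "two_path V E xs a \<longleftrightarrow> is_path V E xs \<and> length xs = a + 1 \<and> a \<ge> 1 \<and>
     deg V E (xs ! 0) \<noteq> 2 \<and> deg V E (xs ! a) \<noteq> 2 \<and>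
     (\<forall>i. 0 < i \<and> i < a \<longrightarrow> deg V E (xs ! i) = 2)"

definition ray :: "nat set \<Rightarrow> (nat \<Rightarrow> nat \<Rightarrow> bool) \<Rightarrow> nat list \<Rightarrow> nat \<Rightarrow> bool" where
  "ray V E xs a \<longleftrightarrow> two_path V E xs a \<and> deg V E (xs ! 0) > 2 \<and> deg V E (xs ! a) = 1"

definition longest_two_path :: "nat set \<Rightarrow> (nat \<Rightarrow> nat \<Rightarrow> bool) \<Rightarrow> nat \<Rightarrow> bool" where
  "longest_two_path V E d \<longleftrightarrow> (\<exists>xs. two_path V E xs d) \<and> (\<forall>xs a. two_path V E xs a \<longrightarrow> a \<le> d)"

definition C_gadget :: "nat set \<Rightarrow> (nat \<Rightarrow> nat \<Rightarrow> bool) \<Rightarrow> nat \<Rightarrow> nat \<Rightarrow> nat list \<Rightarrow> bool" where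
  "C_gadget V E d k xs \<longleftrightarrow> is_path V E xs \<and> length xs = k + 1 \<and>
     (\<forall>i. 0 < i \<and> i < k \<longrightarrow>
        deg V E (xs ! i) = 2 \<or>
        (deg V E (xs ! i) > 2 \<and>
         (\<forall>y. E (xs ! i) y \<and> y \<noteq> xs ! (i - 1) \<and> y \<noteq> xs ! (i + 1) \<longrightarrow>
            (\<exists>r a. ray V E r a \<and> a \<le> d \<and> r ! 0 = xs ! i \<and> y \<in> set r))))"

text \<open>Strong C-gadget of order d with k junctions; idx j plays the role of i_j.\<close>
definition strong_C_gadget :: "nat set \<Rightarrow> (nat \<Rightarrow> nat \<Rightarrow> bool) \<Rightarrow> nat \<Rightarrow> nat \<Rightarrow> nat list \<Rightarrow> bool" where
  "strong_C_gadget V E d k xs \<longleftrightarrow> (\<exists>L. C_gadget V E d L xs \<and>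
     (\<exists>idx :: nat \<Rightarrow> nat. idx 0 = 0 \<and> idx (k + 1) = L \<and>
        (\<forall>j \<le> k. idx j + 2 * d < idx (Suc j)) \<and>
        (\<forall>j. 1 \<le> j \<and> j \<le> k \<longrightarrow>
           (\<exists>r. ray V E r d \<and> r ! 0 = xs ! idx j \<and>
                xs ! (idx j - 1) \<notin> set r \<and> xs ! (idx j + 1) \<notin> set r))))"

end

theory Submission imports Defs begin

lemma path_take: "is_path V E ys \<Longrightarrow> 0 < n \<Longrightarrow> is_path V E (take n ys)"
  unfolding is_path_def
  by (auto dest: in_set_takeD)

lemma path_drop: "is_path V E ys \<Longrightarrow> n < length ys \<Longrightarrow> is_path V E (drop n ys)"
  unfolding is_path_def
  by (auto dest: in_set_dropD)

lemma path_rev: "is_tree V E \<Longrightarrow> is_path V E ys \<Longrightarrow> is_path V E (rev ys)"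
  unfolding is_path_def
proof (intro conjI allI impI)
  fix i assume t: "is_tree V E" and p: "ys \<noteq> [] \<and> distinct ys \<and> set ys \<subseteq> V \<and> (\<forall>i. Suc i < length ys \<longrightarrow> E (ys ! i) (ys ! Suc i))"
    and i: "Suc i < length (rev ys)"
  have sym: "\<And>x y. E x y \<Longrightarrow> E y x" using t unfolding is_tree_def by blast
  have "E (ys ! (length ys - Suc (Suc i))) (ys ! Suc (length ys - Suc (Suc i)))"
    using p i by auto
  moreover have "Suc (length ys - Suc (Suc i)) = length ys - Suc i" using i by auto
  ultimately show "E (rev ys ! i) (rev ys ! Suc i)" using i sym by (auto simp: rev_nth)
qed (auto)

lemma no_cycle:
  assumes t: "is_tree V E" and p: "is_path V E ys" and j: "2 \<le> j" "j < length ys"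
    and e: "E (ys ! j) (ys ! 0)"
  shows False
proof -
  have "is_path V E (take (Suc j) ys)" using path_take[OF p] by simp
  moreover have "length (take (Suc j) ys) \<ge> 3" using j by simp
  moreover have "last (take (Suc j) ys) = ys ! j" using j
    by (subst last_conv_nth) auto
  moreover have "hd (take (Suc j) ys) = ys ! 0" using j
    by (subst hd_conv_nth) auto
  ultimately show False using t e unfolding is_tree_def by metis
qed

lemma ray_avoid:
  assumes t: "is_tree V E" and p: "is_path V E r" and r0: "r ! 0 = x" and y: "y \<in> set r"
    and exy: "E x y" and exw: "E x w" and wy: "w \<noteq> y"
  shows "w \<notin> set r"
proof
  assume w: "w \<in> set r"
  have sym: "\<And>x y. E x y \<Longrightarrow> E y x" and irr: "\<And>x. \<not> E x x" using t unfolding is_tree_def by blast+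
  obtain m where m: "m < length r" "r ! m = y" using y by (metis in_set_conv_nth)
  obtain j where j: "j < length r" "r ! j = w" using w by (metis in_set_conv_nth)
  have "m \<noteq> 0" using m r0 exy irr by (metis)
  moreover have "\<not> m \<ge> 2" using no_cycle[OF t p _ m(1)] m r0 sym exy by blast
  ultimately have m1: "m = 1" by auto
  have "j \<noteq> 0" using j r0 exw irr by (metis)
  moreover have "j \<noteq> 1" using j m m1 wy by auto
  moreover have "\<not> j \<ge> 2" using no_cycle[OF t p _ j(1)] j r0 sym exw by blast
  ultimately show False by auto
qed

lemma deg_cases:
  assumes t: "is_tree V E" and u: "E x u" and v: "E x v" and uv: "u \<noteq> v"
  shows "(deg V E x = 2 \<longleftrightarrow> (\<forall>y. E x y \<longrightarrow> y = u \<or> y = v)) \<and>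
         (deg V E x > 2 \<longleftrightarrow> (\<exists>y. E x y \<and> y \<noteq> u \<and> y \<noteq> v))"
proof -
  have fin: "finite V" and EV: "\<And>a b. E a b \<Longrightarrow> a \<in> V \<and> b \<in> V" using t unfolding is_tree_def by blast+
  let ?N = "{y \<in> V. E x y}"
  have finN: "finite ?N" using fin by simp
  show ?thesis
  proof (cases "\<exists>y. E x y \<and> y \<noteq> u \<and> y \<noteq> v")
    case True
    then obtain y where y: "E x y" "y \<noteq> u" "y \<noteq> v" by blast
    have "{u, v, y} \<subseteq> ?N" using u v y EV by auto
    hence "card {u,v,y} \<le> card ?N" using finN card_mono by blast
    moreover have "card {u,v,y} = 3" using uv y by auto
    ultimately have "deg V E x \<ge> 3" unfolding deg_def by simp
    then show ?thesis using True by auto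
  next
    case False
    hence "?N = {u, v}" using u v EV by auto
    hence "deg V E x = 2" unfolding deg_def using uv by simp
    then show ?thesis using False by auto
  qed
qed

lemma extend_front:
  assumes t: "is_tree V E" and p: "is_path V E ys" and l: "2 \<le> length ys"
    and d: "deg V E (ys ! 0) = 2"
  shows "\<exists>z. is_path V E (z # ys)"
proof -
  have sym: "\<And>x y. E x y \<Longrightarrow> E y x" and irr: "\<And>x. \<not> E x x"
    and EV: "\<And>a b. E a b \<Longrightarrow> a \<in> V \<and> b \<in> V" using t unfolding is_tree_def by blast+
  have e01: "E (ys ! 0) (ys ! 1)" using p l unfolding is_path_def by auto
  have "card {y \<in> V. E (ys ! 0) y} = 2" using d unfolding deg_def .
  then obtain a b where ab: "{y \<in> V. E (ys ! 0) y} = {a, b}" "a \<noteq> b" by (auto simp: card_2_iff)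
  have "ys ! 1 \<in> {a, b}" using ab e01 EV by blast
  then obtain z where z: "z \<in> {a,b}" "z \<noteq> ys ! 1" using ab(2) by blast
  have ez: "E (ys ! 0) z" using z ab by blast
  have zn: "z \<notin> set ys"
  proof
    assume "z \<in> set ys"
    then obtain j where j: "j < length ys" "ys ! j = z" by (metis in_set_conv_nth)
    have "j \<noteq> 0" using j ez irr by metis
    moreover have "j \<noteq> 1" using j z by auto
    moreover have "\<not> j \<ge> 2" using no_cycle[OF t p _ j(1)] j sym ez by blast
    ultimately show False by auto
  qed
  have "is_path V E (z # ys)"
    unfolding is_path_def
  proof (intro conjI allI impI)
    show "distinct (z # ys)" using zn p unfolding is_path_def by auto
    show "set (z # ys) \<subseteq> V" using p EV ez unfolding is_path_def by auto
    fix i assume i: "Suc i < length (z # ys)"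
    show "E ((z # ys) ! i) ((z # ys) ! Suc i)"
    proof (cases i)
      case 0 then show ?thesis using sym ez by simp
    next
      case (Suc i') then show ?thesis using p i unfolding is_path_def by auto
    qed
  qed simp
  then show ?thesis by blast
qed

lemma path_len: "is_tree V E \<Longrightarrow> is_path V E ys \<Longrightarrow> length ys \<le> card V"
  unfolding is_path_def is_tree_def
  by (metis card_mono distinct_card)

lemma extend:
  assumes t: "is_tree V E"
  shows "is_path V E ys \<Longrightarrow> 2 \<le> length ys \<Longrightarrow> (\<forall>i. 0 < i \<and> i < length ys - 1 \<longrightarrow> deg V E (ys ! i) = 2)
     \<Longrightarrow> \<exists>zs. two_path V E zs (length zs - 1) \<and> length ys \<le> length zs"
proof (induction "card V - length ys" arbitrary: ys rule: less_induct)
  case less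
  note p = less.prems(1) and l = less.prems(2) and inner = less.prems(3)
  show ?case
  proof (cases "deg V E (ys ! 0) = 2")
    case True
    then obtain z where pz: "is_path V E (z # ys)" using extend_front[OF t p l] by blast
    have "length (z # ys) \<le> card V" using path_len[OF t pz] .
    hence lt: "card V - length (z # ys) < card V - length ys" by simp
    have inner': "\<forall>i. 0 < i \<and> i < length (z # ys) - 1 \<longrightarrow> deg V E ((z # ys) ! i) = 2"
    proof (intro allI impI)
      fix i assume i: "0 < i \<and> i < length (z # ys) - 1"
      then obtain i' where i': "i = Suc i'" by (cases i) auto
      show "deg V E ((z # ys) ! i) = 2"
        using True inner i i' by (cases i') auto
    qed
    from less.hyps[OF lt pz _ inner'] l obtain zs where
      "two_path V E zs (length zs - 1)" "length (z # ys) \<le> length zs" by auto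
    then show ?thesis by auto
  next
    case F0: False
    show ?thesis
    proof (cases "deg V E (ys ! (length ys - 1)) = 2")
      case True
      have pr: "is_path V E (rev ys)" using path_rev[OF t p] .
      have "deg V E (rev ys ! 0) = 2" using True l by (subst rev_nth) auto
      then obtain z where pz0: "is_path V E (z # rev ys)" using extend_front[OF t pr] l by auto
      have pz: "is_path V E (ys @ [z])" using path_rev[OF t pz0] by simp
      have "length (ys @ [z]) \<le> card V" using path_len[OF t pz] .
      hence lt: "card V - length (ys @ [z]) < card V - length ys" by simp
      have inner': "\<forall>i. 0 < i \<and> i < length (ys @ [z]) - 1 \<longrightarrow> deg V E ((ys @ [z]) ! i) = 2"
      proof (intro allI impI)
        fix i assume i: "0 < i \<and> i < length (ys @ [z]) - 1"
        show "deg V E ((ys @ [z]) ! i) = 2"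
        proof (cases "i = length ys - 1")
          case True then show ?thesis using \<open>deg V E (ys ! (length ys - 1)) = 2\<close> i
            by (simp add: nth_append)
        next
          case False
          hence "i < length ys - 1" using i by simp linarith
          then show ?thesis using inner i by (simp add: nth_append)
        qed
      qed
      from less.hyps[OF lt pz _ inner'] l obtain zs where
        "two_path V E zs (length zs - 1)" "length (ys @ [z]) \<le> length zs" by auto
      then show ?thesis by auto
    next
      case False
      have "two_path V E ys (length ys - 1)"
        unfolding two_path_def using p l F0 False inner by auto
      then show ?thesis by blast
    qed
  qed
qed

fun FF :: "nat \<Rightarrow> nat \<Rightarrow> nat \<Rightarrow> nat" where
  "FF k d 0 = d"
| "FF k d (Suc e) = (k + 2) * (FF k d e + 2 * Suc e + 1)"

lemma comb:
  fixes g :: "nat \<Rightarrow> nat"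
  shows "\<forall>s. (\<forall>i. s \<le> i \<and> i < s + FF k d e \<longrightarrow> g i \<le> e) \<and>
    \<not> (\<exists>s'. s \<le> s' \<and> s' + d \<le> s + FF k d e \<and> (\<forall>i. s' \<le> i \<and> i < s' + d \<longrightarrow> g i = 0)) \<longrightarrow>
    (\<exists>e' a b J. 1 \<le> e' \<and> e' \<le> e \<and> s \<le> a \<and> a < b \<and> b < s + FF k d e \<and> J 0 = a \<and> J (k + 1) = b \<and>
       (\<forall>j\<le>k. J j + 2 * e' < J (Suc j)) \<and>
       (\<forall>j. 1 \<le> j \<and> j \<le> k \<longrightarrow> a < J j \<and> J j < b \<and> g (J j) = e') \<and>
       (\<forall>i. a < i \<and> i < b \<longrightarrow> g i \<le> e'))"
proof (induction e)
  case 0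
  show ?case
  proof (intro allI impI)
    fix s assume "(\<forall>i. s \<le> i \<and> i < s + FF k d 0 \<longrightarrow> g i \<le> 0) \<and>
    \<not> (\<exists>s'. s \<le> s' \<and> s' + d \<le> s + FF k d 0 \<and> (\<forall>i. s' \<le> i \<and> i < s' + d \<longrightarrow> g i = 0))"
    then have False by auto
    then show "\<exists>e' a b J. 1 \<le> e' \<and> e' \<le> 0 \<and> s \<le> a \<and> a < b \<and> b < s + FF k d 0 \<and> J 0 = a \<and> J (k + 1) = b \<and>
       (\<forall>j\<le>k. J j + 2 * e' < J (Suc j)) \<and>
       (\<forall>j. 1 \<le> j \<and> j \<le> k \<longrightarrow> a < J j \<and> J j < b \<and> g (J j) = e') \<and>
       (\<forall>i. a < i \<and> i < b \<longrightarrow> g i \<le> e')" ..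
  qed
next
  case (Suc e)
  define c where "c = FF k d e + 2 * Suc e + 1"
  have F: "FF k d (Suc e) = (k + 2) * c" unfolding c_def by simp
  show ?case
  proof (intro allI impI)
    fix s assume as: "(\<forall>i. s \<le> i \<and> i < s + FF k d (Suc e) \<longrightarrow> g i \<le> Suc e) \<and>
    \<not> (\<exists>s'. s \<le> s' \<and> s' + d \<le> s + FF k d (Suc e) \<and> (\<forall>i. s' \<le> i \<and> i < s' + d \<longrightarrow> g i = 0))"
    show "\<exists>e' a b J. 1 \<le> e' \<and> e' \<le> Suc e \<and> s \<le> a \<and> a < b \<and> b < s + FF k d (Suc e) \<and> J 0 = a \<and> J (k + 1) = b \<and>
       (\<forall>j\<le>k. J j + 2 * e' < J (Suc j)) \<and>
       (\<forall>j. 1 \<le> j \<and> j \<le> k \<longrightarrow> a < J j \<and> J j < b \<and> g (J j) = e') \<and>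
       (\<forall>i. a < i \<and> i < b \<longrightarrow> g i \<le> e')"
    proof (cases "\<exists>j<k+2. \<forall>i. s + j * c \<le> i \<and> i < s + j * c + FF k d e \<longrightarrow> g i \<le> e")
      case True
      then obtain j where j: "j < k + 2" "\<forall>i. s + j * c \<le> i \<and> i < s + j * c + FF k d e \<longrightarrow> g i \<le> e"
        by blast
      have "j * c \<le> (k + 1) * c" using j(1) by (intro mult_le_mono1) simp
      hence W: "j * c + FF k d e \<le> FF k d (Suc e)" using F unfolding c_def by simp
      have pre: "(\<forall>i. s + j * c \<le> i \<and> i < s + j * c + FF k d e \<longrightarrow> g i \<le> e) \<and>
        \<not> (\<exists>s'. s + j * c \<le> s' \<and> s' + d \<le> s + j * c + FF k d e \<and> (\<forall>i. s' \<le> i \<and> i < s' + d \<longrightarrow> g i = 0))"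
        using j(2) as W by auto
      from Suc.IH[rule_format, OF pre] obtain e' a b J where
        r: "1 \<le> e' \<and> e' \<le> e \<and> s + j * c \<le> a \<and> a < b \<and> b < s + j * c + FF k d e \<and> J 0 = a \<and> J (k + 1) = b \<and>
       (\<forall>j\<le>k. J j + 2 * e' < J (Suc j)) \<and>
       (\<forall>j. 1 \<le> j \<and> j \<le> k \<longrightarrow> a < J j \<and> J j < b \<and> g (J j) = e') \<and>
       (\<forall>i. a < i \<and> i < b \<longrightarrow> g i \<le> e')" by blast
      show ?thesis
        apply (rule exI[of _ e'], rule exI[of _ a], rule exI[of _ b], rule exI[of _ J])
        using r W by auto
    next
      case False
      hence "\<forall>j. j < k + 2 \<longrightarrow> (\<exists>i. s + j * c \<le> i \<and> i < s + j * c + FF k d e \<and> \<not> g i \<le> e)"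
        by auto
      then obtain P where P: "\<And>j. j < k + 2 \<Longrightarrow> s + j * c \<le> P j \<and> P j < s + j * c + FF k d e \<and> \<not> g (P j) \<le> e"
        by metis
      have inw: "\<And>j. j < k + 2 \<Longrightarrow> P j < s + FF k d (Suc e)"
      proof -
        fix j assume j: "j < k + 2"
        have "j * c \<le> (k + 1) * c" using j by (intro mult_le_mono1) simp
        thus "P j < s + FF k d (Suc e)" using P[OF j] F unfolding c_def by simp
      qed
      have gP: "g (P j) = Suc e" if j: "j < k + 2" for j
      proof -
        have "s \<le> P j" using P[OF j] by simp
        hence "g (P j) \<le> Suc e" using inw[OF j] as by blast
        thus ?thesis using P[OF j] by simp
      qed
      have sp: "\<And>j. j \<le> k \<Longrightarrow> P j + 2 * Suc e < P (Suc j)"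
      proof -
        fix j assume j: "j \<le> k"
        have "Suc j * c = j * c + c" by simp
        thus "P j + 2 * Suc e < P (Suc j)" using P[of j] P[of "Suc j"] j unfolding c_def by simp
      qed
      have ab: "P 0 < P (k + 1)"
        using P[of 0] P[of "k+1"] unfolding c_def by simp
      have mid: "\<And>j. 1 \<le> j \<Longrightarrow> j \<le> k \<Longrightarrow> P 0 < P j \<and> P j < P (k + 1)"
      proof -
        fix j assume j: "1 \<le> j" "j \<le> k"
        have "1 * c \<le> j * c" using j by (intro mult_le_mono1) simp
        moreover have "Suc j * c \<le> (k + 1) * c" using j by (metis Suc_eq_plus1 Suc_le_mono mult_le_mono1)
        moreover have "Suc j * c = j * c + c" by simp
        ultimately show "P 0 < P j \<and> P j < P (k + 1)" using P[of 0] P[of j] P[of "k+1"] j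
          unfolding c_def by simp
      qed
      show ?thesis
        apply (rule exI[of _ "Suc e"], rule exI[of _ "P 0"], rule exI[of _ "P (k+1)"], rule exI[of _ P])
        using ab mid gP sp inw[of 0] inw[of "k+1"] P[of 0] as by auto
    qed
  qed
qed


theorem lemma34:
  fixes k d :: nat
  assumes "d \<ge> 1" and "k \<ge> 1"
  shows "\<exists>L > 0. \<forall>V E. is_tree V E \<and> longest_two_path V E d \<and> (\<exists>xs. C_gadget V E d L xs) \<longrightarrow>
           (\<exists>d'. 1 \<le> d' \<and> d' \<le> d \<and> (\<exists>k' \<ge> k. \<exists>ys. strong_C_gadget V E d' k' ys))"
proof (rule exI[of _ "FF k d d + 1"], intro conjI allI impI)
  show "0 < FF k d d + 1" by simp
  fix V E
  assume H: "is_tree V E \<and> longest_two_path V E d \<and> (\<exists>xs. C_gadget V E d (FF k d d + 1) xs)"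
  define L where "L = FF k d d + 1"
  have t: "is_tree V E" using H by blast
  have lg: "\<And>zs a. two_path V E zs a \<Longrightarrow> a \<le> d" using H unfolding longest_two_path_def by blast
  obtain xs where G: "C_gadget V E d L xs" using H L_def by blast
  have sym: "\<And>x y. E x y \<Longrightarrow> E y x" and irr: "\<And>x. \<not> E x x"
    and EV: "\<And>a b. E a b \<Longrightarrow> a \<in> V \<and> b \<in> V" using t unfolding is_tree_def by blast+
  have px: "is_path V E xs" and lx: "length xs = L + 1" using G unfolding C_gadget_def by auto
  have Gi: "\<And>i. 0 < i \<Longrightarrow> i < L \<Longrightarrow> deg V E (xs ! i) = 2 \<or>
        (deg V E (xs ! i) > 2 \<and>
         (\<forall>y. E (xs ! i) y \<and> y \<noteq> xs ! (i - 1) \<and> y \<noteq> xs ! (i + 1) \<longrightarrow>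
            (\<exists>r a. ray V E r a \<and> a \<le> d \<and> r ! 0 = xs ! i \<and> y \<in> set r)))"
    using G unfolding C_gadget_def by blast
  define good where "good i e \<longleftrightarrow> (\<forall>y. E (xs ! i) y \<and> y \<noteq> xs ! (i - 1) \<and> y \<noteq> xs ! (i + 1) \<longrightarrow>
            (\<exists>r a. ray V E r a \<and> a \<le> e \<and> r ! 0 = xs ! i \<and> y \<in> set r))" for i e
  define g where "g i = (LEAST e. good i e)" for i
  have mono: "good i e \<Longrightarrow> e \<le> e' \<Longrightarrow> good i e'" for i e e'
    unfolding good_def by (meson le_trans)
  have nbr: "E (xs ! i) (xs ! (i - 1)) \<and> E (xs ! i) (xs ! (i + 1)) \<and> xs ! (i - 1) \<noteq> xs ! (i + 1)"
    if i: "0 < i" "i < L" for i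
  proof -
    obtain i' where i': "i = Suc i'" using i by (cases i) auto
    have "E (xs ! i') (xs ! Suc i')" using px i i' lx unfolding is_path_def by auto
    hence "E (xs ! (i - 1)) (xs ! i)" using i' by simp
    moreover have "E (xs ! i) (xs ! Suc i)" using px i lx unfolding is_path_def by auto
    moreover have "xs ! (i - 1) \<noteq> xs ! (i + 1)"
      using px i lx unfolding is_path_def by (simp add: nth_eq_iff_index_eq)
    ultimately show ?thesis using sym by auto
  qed
  have DC: "(deg V E (xs ! i) = 2 \<longleftrightarrow> (\<forall>y. E (xs ! i) y \<longrightarrow> y = xs ! (i - 1) \<or> y = xs ! (i + 1))) \<and>
         (deg V E (xs ! i) > 2 \<longleftrightarrow> (\<exists>y. E (xs ! i) y \<and> y \<noteq> xs ! (i - 1) \<and> y \<noteq> xs ! (i + 1)))"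
    if i: "0 < i" "i < L" for i
    using deg_cases[OF t] nbr[OF i] by blast
  have goodd: "good i d" if i: "0 < i" "i < L" for i
    using Gi[OF i] DC[OF i] unfolding good_def by auto
  have gA: "good i (g i) \<and> g i \<le> d" if i: "0 < i" "i < L" for i
    unfolding g_def using goodd[OF i] by (metis LeastI Least_le)
  have ray_pos: "\<And>r a. ray V E r a \<Longrightarrow> 1 \<le> a" unfolding ray_def two_path_def by blast
  have gB: "deg V E (xs ! i) = 2" if i: "0 < i" "i < L" and g0: "g i = 0" for i
  proof -
    have "good i 0" using gA[OF i] g0 by simp
    hence "\<not> (\<exists>y. E (xs ! i) y \<and> y \<noteq> xs ! (i - 1) \<and> y \<noteq> xs ! (i + 1))"
      unfolding good_def using ray_pos by fastforce
    thus ?thesis using DC[OF i] by auto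
  qed
  have gC: "deg V E (xs ! i) > 2" if i: "0 < i" "i < L" and g0: "g i \<noteq> 0" for i
  proof -
    have "\<not> good i 0" using g0 unfolding g_def by (metis Least_le le_zero_eq)
    thus ?thesis using DC[OF i] unfolding good_def by blast
  qed
  have gD: "\<exists>r. ray V E r (g i) \<and> r ! 0 = xs ! i \<and> xs ! (i - 1) \<notin> set r \<and> xs ! (i + 1) \<notin> set r"
    if i: "0 < i" "i < L" and g0: "g i \<noteq> 0" for i
  proof -
    have "\<not> good i (g i - 1)" using g0 unfolding g_def
      by (metis diff_less not_less_Least zero_less_one neq0_conv g_def)
    then obtain y where y: "E (xs ! i) y" "y \<noteq> xs ! (i - 1)" "y \<noteq> xs ! (i + 1)"
      and nr: "\<And>r a. ray V E r a \<Longrightarrow> r ! 0 = xs ! i \<Longrightarrow> y \<in> set r \<Longrightarrow> \<not> a \<le> g i - 1"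
      unfolding good_def by blast
    obtain r a where r: "ray V E r a" "a \<le> g i" "r ! 0 = xs ! i" "y \<in> set r"
      using gA[OF i] y unfolding good_def by blast
    have "a = g i" using nr[OF r(1) r(3) r(4)] r(2) by simp
    moreover have pr: "is_path V E r" using r(1) unfolding ray_def two_path_def by blast
    have "xs ! (i - 1) \<notin> set r" using ray_avoid[OF t pr r(3) r(4) y(1)] nbr[OF i] y by blast
    moreover have "xs ! (i + 1) \<notin> set r" using ray_avoid[OF t pr r(3) r(4) y(1)] nbr[OF i] y by blast
    ultimately show ?thesis using r by blast
  qed
  have win: "\<forall>i. 1 \<le> i \<and> i < 1 + FF k d d \<longrightarrow> g i \<le> d" using gA L_def by auto
  have nz: "\<not> (\<exists>s'. 1 \<le> s' \<and> s' + d \<le> 1 + FF k d d \<and> (\<forall>i. s' \<le> i \<and> i < s' + d \<longrightarrow> g i = 0))"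
  proof
    assume "\<exists>s'. 1 \<le> s' \<and> s' + d \<le> 1 + FF k d d \<and> (\<forall>i. s' \<le> i \<and> i < s' + d \<longrightarrow> g i = 0)"
    then obtain s' where s': "1 \<le> s'" "s' + d \<le> L" "\<And>i. s' \<le> i \<Longrightarrow> i < s' + d \<Longrightarrow> g i = 0"
      using L_def by auto
    define ys where "ys = take (d + 2) (drop (s' - 1) xs)"
    have ly: "length ys = d + 2" unfolding ys_def using lx s' by simp
    have yn: "ys ! i = xs ! (s' - 1 + i)" if "i < d + 2" for i
      unfolding ys_def using that lx s' by simp
    have py: "is_path V E ys" unfolding ys_def
      by (rule path_take[OF path_drop[OF px]]) (use lx s' in auto)
    have inner: "\<forall>i. 0 < i \<and> i < length ys - 1 \<longrightarrow> deg V E (ys ! i) = 2"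
    proof (intro allI impI)
      fix i assume i: "0 < i \<and> i < length ys - 1"
      have "g (s' - 1 + i) = 0" using s' i ly by (intro s'(3)) auto
      moreover have "0 < s' - 1 + i" "s' - 1 + i < L" using s' i ly by auto
      ultimately show "deg V E (ys ! i) = 2" using gB yn i ly by simp
    qed
    obtain zs where "two_path V E zs (length zs - 1)" "length ys \<le> length zs"
      using extend[OF t py _ inner] ly by auto
    then show False using lg ly by fastforce
  qed
  obtain e' a b J where R: "1 \<le> e'" "e' \<le> d" "1 \<le> a" "a < b" "b < 1 + FF k d d" "J 0 = a" "J (k + 1) = b"
       "\<forall>j\<le>k. J j + 2 * e' < J (Suc j)"
       "\<forall>j. 1 \<le> j \<and> j \<le> k \<longrightarrow> a < J j \<and> J j < b \<and> g (J j) = e'"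
       "\<forall>i. a < i \<and> i < b \<longrightarrow> g i \<le> e'"
    using comb[where g=g and k=k and d=d and e=d, rule_format, of 1] win nz by blast
  have bL: "b < L" using R L_def by simp
  define ys where "ys = drop a (take (b + 1) xs)"
  have ly: "length ys = (b - a) + 1" unfolding ys_def using lx bL R by simp
  have yn: "ys ! i = xs ! (a + i)" if "i \<le> b - a" for i
    unfolding ys_def using that lx bL R by simp
  have py: "is_path V E ys" unfolding ys_def
    by (rule path_drop[OF path_take[OF px]]) (use lx bL R in auto)
  have CG: "C_gadget V E e' (b - a) ys"
    unfolding C_gadget_def
  proof (intro conjI allI impI py ly)
    fix i assume i: "0 < i \<and> i < b - a"
    define p where "p = a + i"
    have p: "0 < p" "p < L" "a < p" "p < b" using i bL R unfolding p_def by auto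
    have e1: "ys ! i = xs ! p" "ys ! (i - 1) = xs ! (p - 1)" "ys ! (i + 1) = xs ! (p + 1)"
      using yn i unfolding p_def by auto
    show "deg V E (ys ! i) = 2 \<or>
        (deg V E (ys ! i) > 2 \<and>
         (\<forall>y. E (ys ! i) y \<and> y \<noteq> ys ! (i - 1) \<and> y \<noteq> ys ! (i + 1) \<longrightarrow>
            (\<exists>r a. ray V E r a \<and> a \<le> e' \<and> r ! 0 = ys ! i \<and> y \<in> set r)))"
    proof (cases "g p = 0")
      case True then show ?thesis using gB[OF p(1,2)] e1 by simp
    next
      case False
      have "good p e'" using mono[of p "g p" e'] gA[OF p(1,2)] R(10) p by blast
      then show ?thesis using gC[OF p(1,2) False] e1 unfolding good_def by simp
    qed
  qed
  have "strong_C_gadget V E e' k ys"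
    unfolding strong_C_gadget_def
  proof (intro exI[of _ "b - a"] conjI CG exI[of _ "\<lambda>j. J j - a"] allI impI)
    show "J 0 - a = 0" using R by simp
    show "J (k + 1) - a = b - a" using R by simp
    fix j
    show "j \<le> k \<Longrightarrow> J j - a + 2 * e' < J (Suc j) - a"
    proof -
      assume j: "j \<le> k"
      have "a \<le> J j"
      proof (cases "j = 0")
        case True then show ?thesis using R by simp
      next
        case False then show ?thesis using R(9) j by (meson less_imp_le_nat less_one not_le)
      qed
      thus ?thesis using R(8) j by fastforce
    qed
  next
    fix j assume j: "1 \<le> j \<and> j \<le> k"
    have Jj: "a < J j" "J j < b" "g (J j) = e'" using R(9) j by auto
    have p: "0 < J j" "J j < L" using Jj bL by auto
    obtain r where r: "ray V E r (g (J j))" "r ! 0 = xs ! J j" "xs ! (J j - 1) \<notin> set r" "xs ! (J j + 1) \<notin> set r"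
      using gD[OF p] Jj R(1) by auto
    have e1: "ys ! (J j - a) = xs ! J j" "ys ! (J j - a - 1) = xs ! (J j - 1)" "ys ! (J j - a + 1) = xs ! (J j + 1)"
      using yn Jj by auto
    show "\<exists>r. ray V E r e' \<and> r ! 0 = ys ! (J j - a) \<and> ys ! (J j - a - 1) \<notin> set r \<and> ys ! (J j - a + 1) \<notin> set r"
      using r e1 Jj by auto
  qed
  then show "\<exists>d'. 1 \<le> d' \<and> d' \<le> d \<and> (\<exists>k' \<ge> k. \<exists>ys. strong_C_gadget V E d' k' ys)"
    using R by blast
qed

end
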